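(* Let $V$ be a finite set. Let $\mathcal{E}:=\{\hat X\in\mathbb{S}^{\{0\}\cup V}_+ : \hat X_{ii}=1\ \forall i\in\{0\}\cup V\}$, $\mathcal{E}':=\{\hat X\in\mathcal{E} : (e_0+e_i)^{\mathsf T}\hat X(e_0+e_j)\ge 0\ \forall ij\in\binom{V}{2}\}$, and $\mathcal{E}'':=\{\hat X\in\mathcal{E} : (e_0-e_i)^{\mathsf T}\hat X(e_0-e_j)\ge 0\ \forall ij\in\binom{V}{2}\}$. Let $\hat{\mathcal{C}}\in\{\mathcal{E},\mathcal{E}',\mathcal{E}''\}$. Then a point $\hat X$ of $\hat{\mathcal{C}}$ is a vertex of $\hat{\mathcal{C}}$ if and only if $\operatorname{rank}(\hat X)=1$. Thus the vertices of $\hat{\mathcal{C}}$ are precisely the matrices $(1\oplus x_S)(1\oplus x_S)^{\mathsf T}$ where $x_S=\chi^S-\chi^{V\setminus S}$ for some $S\subseteq V$.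
   Context: $0$ is a new index not in $V$; $\mathbb{S}^{W}_+$ denotes real symmetric positive semidefinite matrices indexed by $W$, with trace inner product; $e_i$ are standard basis vectors of $\mathbb{R}^{\{0\}\cup V}$. $\chi^S\in\{0,1\}^V$ is the incidence vector of $S$; $1\oplus x\in\mathbb{R}^{\{0\}\cup V}$ has $0$-entry $1$. For a convex set $\mathcal{C}$ in a finite-dimensional space $\mathbb{E}$ and $\bar x\in\mathcal{C}$, the normal cone is $N_{\mathcal{C}}(\bar x):=\{c : \langle c,x\rangle\le\langle c,\bar x\rangle\ \forall x\in\mathcal{C}\}$; $\bar x$ is a vertex if $\dim N_{\mathcal{C}}(\bar x)=\dim\mathbb{E}$. *)

theory Defs
  imports "HOL-Analysis.Analysis"
begin

(* Index set {0} \<union> V is the finite type 'n; the element z plays the role of 0,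
   and V = UNIV - {z}. *)

definition ebas :: "'n::finite \<Rightarrow> real^'n" where
  "ebas i = axis i 1"

definition sym_mats :: "(real^'n^'n) set" where
  "sym_mats = {A. transpose A = A}"

definition psd :: "real^'n^'n \<Rightarrow> bool" where
  "psd A \<longleftrightarrow> transpose A = A \<and> (\<forall>x. 0 \<le> x \<bullet> (A *v x))"

definition elliptope :: "(real^'n::finite^'n) set" where
  "elliptope = {X. psd X \<and> (\<forall>i. X $ i $ i = 1)}"

definition elliptope' :: "'n::finite \<Rightarrow> (real^'n^'n) set" where
  "elliptope' z = {X \<in> elliptope. \<forall>i j. i \<noteq> z \<longrightarrow> j \<noteq> z \<longrightarrow> i \<noteq> j \<longrightarrow>
      0 \<le> (ebas z + ebas i) \<bullet> (X *v (ebas z + ebas j))}"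

definition elliptope'' :: "'n::finite \<Rightarrow> (real^'n^'n) set" where
  "elliptope'' z = {X \<in> elliptope. \<forall>i j. i \<noteq> z \<longrightarrow> j \<noteq> z \<longrightarrow> i \<noteq> j \<longrightarrow>
      0 \<le> (ebas z - ebas i) \<bullet> (X *v (ebas z - ebas j))}"

definition normal_cone :: "(real^'n::finite^'n) set \<Rightarrow> real^'n^'n \<Rightarrow> (real^'n^'n) set" where
  "normal_cone C X = {A \<in> sym_mats. \<forall>Y\<in>C. trace (A ** Y) \<le> trace (A ** X)}"

definition is_vertex :: "(real^'n::finite^'n) set \<Rightarrow> real^'n^'n \<Rightarrow> bool" where
  "is_vertex C X \<longleftrightarrow> X \<in> C \<and> aff_dim (normal_cone C X) = aff_dim (sym_mats :: (real^'n^'n) set)"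

(* 1 \<oplus> x_S with x_S = \<chi>^S - \<chi>^{V\S}, as a vector indexed by {0} \<union> V *)
definition lift_xS :: "'n::finite \<Rightarrow> 'n set \<Rightarrow> real^'n" where
  "lift_xS z S = (\<chi> i. if i = z then 1 else if i \<in> S then 1 else -1)"

definition outer :: "real^'n::finite \<Rightarrow> real^'n^'n" where
  "outer u = (\<chi> i j. u $ i * u $ j)"

end

theory Submission
  imports Defs
begin

lemma qf_sym:
  fixes X :: "real^'n::finite^'n"
  assumes "transpose X = X"
  shows "p \<bullet> (X *v q) = q \<bullet> (X *v p)"
proof -
  have "p \<bullet> (X *v q) = (p v* X) \<bullet> q" by (simp add: dot_lmul_matrix)
  also have "p v* X = transpose X *v p" by simp
  also have "\<dots> = X *v p" using assms by simp
  finally show ?thesis by (simp add: inner_commute)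
qed

lemma quad_real_zero:
  fixes b c :: real
  assumes "\<And>t. 0 \<le> 2*t*b + t*t*c"
  shows "b = 0"
proof (rule ccontr)
  assume "b \<noteq> 0"
  define e where "e = 1 / (\<bar>c\<bar> + 1)"
  have e0: "e > 0" by (simp add: e_def add_pos_nonneg)
  have "e * \<bar>c\<bar> < 1" by (simp add: e_def)
  moreover have "e * c \<le> e * \<bar>c\<bar>" using e0 by (intro mult_left_mono) auto
  ultimately have ec: "e * c - 2 < 0" by linarith
  have "0 \<le> 2*(-b*e)*b + (-b*e)*(-b*e)*c" by (rule assms)
  also have "\<dots> = (e*(b*b))*(e*c - 2)" by (simp add: algebra_simps)
  finally have "0 \<le> (e*(b*b))*(e*c - 2)" .
  moreover have "e*(b*b) > 0" using e0 \<open>b \<noteq> 0\<close> by (auto simp: zero_less_mult_iff)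
  ultimately have "(e*(b*b))*(e*c - 2) < 0" using ec by (intro mult_pos_neg) auto
  then show False using \<open>0 \<le> (e*(b*b))*(e*c - 2)\<close> by linarith
qed

lemma psd_null:
  fixes X :: "real^'n::finite^'n"
  assumes "psd X" "x \<bullet> (X *v x) = 0"
  shows "X *v x = 0"
proof -
  have sym: "transpose X = X" using assms unfolding psd_def by auto
  define w where "w = X *v x"
  have "\<And>t. 0 \<le> 2*t*(w \<bullet> w) + t*t*(w \<bullet> (X *v w))"
  proof -
    fix t :: real
    have "0 \<le> (x + t *\<^sub>R w) \<bullet> (X *v (x + t *\<^sub>R w))" using assms unfolding psd_def by auto
    also have "\<dots> = x \<bullet> (X *v x) + t * (x \<bullet> (X *v w)) + t * (w \<bullet> (X *v x)) + t*t*(w \<bullet> (X *v w))"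
      by (simp add: algebra_simps inner_add_left inner_add_right)
    also have "x \<bullet> (X *v w) = w \<bullet> (X *v x)" by (rule qf_sym[OF sym])
    finally show "0 \<le> 2*t*(w \<bullet> w) + t*t*(w \<bullet> (X *v w))" using assms(2) by (simp add: w_def)
  qed
  then have "w \<bullet> w = 0" by (rule quad_real_zero)
  then show ?thesis by (simp add: w_def)
qed

lemma axis_vmult: "(axis k (1::real) v* (N::real^'n::finite^'m::finite)) = N $ k"
proof -
  have "\<And>i j. (if i = k then 1 else 0) * N$i$j = (if i = k then N$i$j else 0)" by simp
  then show ?thesis by (simp add: vec_eq_iff vector_matrix_mult_def axis_def)
qed

lemma triple_entry:
  fixes N X :: "real^'n::finite^'n"
  shows "(N ** X ** transpose N) $ k $ l = N$k \<bullet> (X *v N$l)"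
proof -
  have "(N ** X ** transpose N) $ k $ l = (\<Sum>j\<in>UNIV. \<Sum>m\<in>UNIV. N$k$m * X$m$j * N$l$j)"
    by (simp add: matrix_matrix_mult_def transpose_def sum_distrib_right)
  also have "\<dots> = (\<Sum>m\<in>UNIV. \<Sum>j\<in>UNIV. N$k$m * X$m$j * N$l$j)" by (rule sum.swap)
  also have "\<dots> = N$k \<bullet> (X *v N$l)"
    by (simp add: inner_vec_def matrix_vector_mult_def sum_distrib_left mult.assoc)
  finally show ?thesis .
qed

lemma triple_qf:
  fixes N X :: "real^'n::finite^'n"
  shows "a \<bullet> ((N ** X ** transpose N) *v b) = (a v* N) \<bullet> (X *v (b v* N))"
proof -
  have "(N ** X ** transpose N) *v b = N *v (X *v (transpose N *v b))"
    by (simp add: matrix_vector_mul_assoc[symmetric])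
  then show ?thesis by (simp add: dot_lmul_matrix)
qed

lemma triple_transpose:
  fixes N X :: "real^'n::finite^'n"
  assumes "transpose X = X"
  shows "transpose (N ** X ** transpose N) = N ** X ** transpose N"
  by (simp add: matrix_transpose_mul assms matrix_mul_assoc)

lemma scaleR_mvmult: "((c::real) *\<^sub>R (M::real^'n::finite^'m::finite)) *v x = c *\<^sub>R (M *v x)"
  by (simp add: vec_eq_iff matrix_vector_mult_def sum_distrib_left mult.assoc)

lemma trace_scaleR: "trace ((c::real) *\<^sub>R (M::real^'n::finite^'n)) = c * trace M"
  by (simp add: trace_def sum_distrib_left)

lemma triple_psd:
  fixes N X :: "real^'n::finite^'n"
  assumes "psd X" "c \<ge> 0"
  shows "psd (c *\<^sub>R (N ** X ** transpose N))"
  using assms unfolding psd_def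
  by (auto simp: transpose_scalar triple_transpose triple_qf scaleR_mvmult)

lemma inner_axis_X: "axis l (1::real) \<bullet> w = w $ l"
  by (simp add: inner_axis')

lemma X_axis: "((X::real^'n::finite^'m::finite) *v axis k 1) $ l = X $ l $ k"
  by (simp add: matrix_vector_mult_def axis_def if_distrib cong: if_cong)

lemma small_s_zero:
  fixes a b c \<delta> :: real
  assumes d0: "\<delta> > 0"
    and H: "\<And>s. \<bar>s\<bar> < \<delta> \<Longrightarrow> (1-s^2)^2*a + s*(1-s^2)*b + s^2*c \<le> (1+s^2)^2*a"
  shows "b = 0"
proof (rule ccontr)
  assume bne: "b \<noteq> 0"
  define d where "d = c - 4*a"
  have H2: "s*(1-s^2)*b + s^2*d \<le> 0" if "\<bar>s\<bar> < \<delta>" for s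
  proof -
    have "(1-s^2)^2*a + s*(1-s^2)*b + s^2*c \<le> (1+s^2)^2*a" using H that .
    then show ?thesis by (simp add: d_def power2_eq_square algebra_simps)
  qed
  define t where "t = min (\<delta>/2) (min (1/2) (\<bar>b\<bar>/(4*(\<bar>d\<bar>+1))))"
  have t0: "t > 0" using d0 bne by (simp add: t_def add_pos_nonneg)
  have tle0: "t \<le> 1/2" "t \<le> \<delta>/2" "t \<le> \<bar>b\<bar>/(4*(\<bar>d\<bar>+1))" unfolding t_def
    by (rule min.coboundedI2, rule min.cobounded1) (rule min.cobounded1, rule min.coboundedI2, rule min.cobounded2)
  have tle: "t \<le> 1/2" "t < \<delta>" "t \<le> \<bar>b\<bar>/(4*(\<bar>d\<bar>+1))" using tle0 d0 by auto
  have tt: "t*t \<le> 1/4" using mult_mono[OF tle(1) tle(1)] t0 by simp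
  have td: "t*\<bar>d\<bar> \<le> \<bar>b\<bar>/4"
  proof -
    have "t*\<bar>d\<bar> \<le> \<bar>b\<bar>/(4*(\<bar>d\<bar>+1)) * \<bar>d\<bar>" using mult_right_mono[OF tle(3), of "\<bar>d\<bar>"] by simp
    also have "\<dots> = (\<bar>b\<bar>/4) * (\<bar>d\<bar>/(\<bar>d\<bar>+1))" by simp
    also have "\<dots> \<le> (\<bar>b\<bar>/4) * 1" by (intro mult_left_mono) auto
    finally show ?thesis by simp
  qed
  obtain s where s: "\<bar>s\<bar> = t" "s*b = t*\<bar>b\<bar>"
  proof (cases "b > 0")
    case True then show ?thesis using that[of t] t0 by auto
  next
    case False then show ?thesis using that[of "-t"] t0 by auto
  qed
  have le0: "s*(1-s^2)*b + s^2*d \<le> 0" using H2 s tle by auto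
  have s2: "s^2 = t*t" using s(1) by (metis abs_mult_self_eq power2_eq_square)
  have "s*(1-s^2)*b + s^2*d = (1-s^2)*(s*b) + s^2*d" by (simp add: algebra_simps)
  also have "\<dots> = (1-t*t)*(t*\<bar>b\<bar>) + t*t*d" by (simp only: s(2) s2)
  also have "\<dots> = t*((1-t*t)*\<bar>b\<bar> + t*d)" by (simp add: algebra_simps)
  finally have "t*((1-t*t)*\<bar>b\<bar> + t*d) \<le> 0" using le0 by linarith
  then have "(1-t*t)*\<bar>b\<bar> + t*d \<le> 0" using t0 by (simp add: mult_le_0_iff)
  moreover have "(1-t*t)*\<bar>b\<bar> \<ge> (3/4)*\<bar>b\<bar>" using tt by (intro mult_right_mono) auto
  moreover have "t*d \<ge> - (t*\<bar>d\<bar>)" using mult_left_mono[of "-d" "\<bar>d\<bar>" t] t0 by (simp add: abs_ge_minus_self)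
  moreover have "\<bar>b\<bar> > 0" using bne by simp
  ultimately show False using td by linarith
qed

lemma ebas_inner [simp]: "ebas l \<bullet> w = w $ l"
  by (simp add: ebas_def inner_axis')

lemma X_ebas [simp]: "((X::real^'n::finite^'m::finite) *v ebas k) $ l = X $ l $ k"
  by (simp add: ebas_def X_axis)

lemma inner_ebas [simp]: "w \<bullet> ebas l = w $ l"
  by (simp add: ebas_def inner_axis)

lemma transpose_eq_entry: "transpose X = X \<Longrightarrow> X $ i $ j = X $ j $ i"
  by (metis transpose_def vec_lambda_beta)

lemma trace_entries: "trace ((A::real^'n::finite^'n) ** M) = (\<Sum>k\<in>UNIV. \<Sum>l\<in>UNIV. A$k$l * M$l$k)"
  by (simp add: trace_def matrix_matrix_mult_def)

lemma trace_mult_scaleR: "trace ((A::real^'n::finite^'n) ** (c *\<^sub>R M)) = c * trace (A ** M)"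
  by (simp add: trace_entries sum_distrib_left mult.left_commute)

lemma sum3_lin:
  fixes A :: "real^'n::finite^'n"
  shows "(\<Sum>k\<in>UNIV. \<Sum>l\<in>UNIV. A$k$l * (p * f l k + q * h l k + r * u l k)) =
    p * (\<Sum>k\<in>UNIV. \<Sum>l\<in>UNIV. A$k$l * f l k) + q * (\<Sum>k\<in>UNIV. \<Sum>l\<in>UNIV. A$k$l * h l k)
    + r * (\<Sum>k\<in>UNIV. \<Sum>l\<in>UNIV. A$k$l * u l k)"
  by (simp add: sum.distrib sum_distrib_left algebra_simps)

lemma curve_lemma:
  fixes X :: "real^'n::finite^'n" and z i0 :: 'n and \<sigma> :: real and y :: "real^'n"
  assumes psdX: "psd X" and diag: "\<forall>i. X$i$i = 1" and sig: "\<sigma>*\<sigma> = 1"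
    and vz: "(X *v y)$z = 0" and yy: "y \<bullet> (X *v y) = 1" and vi0: "(X *v y)$i0 \<noteq> 0"
  shows "\<exists>B \<delta> Y. transpose B = B \<and> B \<noteq> 0 \<and> \<delta> > (0::real) \<and>
     (\<forall>s. \<bar>s\<bar> < \<delta> \<longrightarrow> Y s \<in> elliptope \<and>
        (\<forall>i j. i \<noteq> z \<longrightarrow> j \<noteq> z \<longrightarrow>
           0 \<le> (ebas z + \<sigma> *\<^sub>R ebas i) \<bullet> (X *v (ebas z + \<sigma> *\<^sub>R ebas j)) \<longrightarrow>
           0 \<le> (ebas z + \<sigma> *\<^sub>R ebas i) \<bullet> (Y s *v (ebas z + \<sigma> *\<^sub>R ebas j)))) \<and>
     (\<forall>A. (\<forall>s. \<bar>s\<bar> < \<delta> \<longrightarrow> trace (A ** Y s) \<le> trace (A ** X)) \<longrightarrow> trace (A ** B) = 0)"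
proof -
  have sym: "transpose X = X" using psdX unfolding psd_def by auto
  have Xs: "X$i$j = X$j$i" for i j using transpose_eq_entry[OF sym] .
  have qs: "p \<bullet> (X *v q) = q \<bullet> (X *v p)" for p q using qf_sym[OF sym] .
  define v where "v = X *v y"
  define a where "a k = ebas z + \<sigma> *\<^sub>R ebas k" for k
  define g where "g k = a k \<bullet> (X *v a k)" for k
  define \<kappa> where "\<kappa> k = 4*\<sigma>*(v$k) / g k" for k
  define K where "K = (\<chi> k. if k = z then 2 *\<^sub>R y else \<sigma> *\<^sub>R (\<kappa> k *\<^sub>R a k - 2 *\<^sub>R y))"
  define N where "N s = (\<chi> k. (1 - s^2) *\<^sub>R ebas k + s *\<^sub>R K$k)" for s :: real
  define Y where "Y s = (1/(1+s^2)^2) *\<^sub>R (N s ** X ** transpose (N s))" for s :: real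
  define \<mu> where "\<mu> s k = 1 - s^2 + s*\<kappa> k" for s :: real and k
  define B where "B = (\<chi> l k. ebas l \<bullet> (X *v K$k) + K$l \<bullet> (X *v ebas k))"
  define \<delta> where "\<delta> = 1/(2*(1 + (\<Sum>k\<in>UNIV. \<bar>\<kappa> k\<bar>)))"
  have ezy: "ebas z \<bullet> (X *v y) = 0" using vz by simp
  have yez: "y \<bullet> (X *v ebas z) = 0" using ezy qs by metis
  have aXez: "a k \<bullet> (X *v ebas z) = 1 + \<sigma> * X$k$z" for k
    using diag by (simp add: a_def algebra_simps)
  have g_eq: "g k = 2 + 2*\<sigma>*X$k$z" if "k \<noteq> z" for k
    using diag sig Xs[of z k] by (simp add: g_def a_def algebra_simps)
  have aXy: "a k \<bullet> (X *v y) = \<sigma> * v$k" for k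
    using vz by (simp add: a_def v_def algebra_simps)
  have kg: "\<kappa> k * g k = 4*\<sigma>*(v$k)" for k
  proof (cases "g k = 0")
    case True
    then have "X *v a k = 0" using psd_null[OF psdX] by (simp add: g_def)
    then have "y \<bullet> (X *v a k) = 0" by simp
    then have "\<sigma> * v$k = 0" using aXy qs by metis
    then show ?thesis using True by simp
  next
    case False then show ?thesis by (simp add: \<kappa>_def)
  qed
  have Nz: "N s $ z = (1-s^2) *\<^sub>R ebas z + (2 * s) *\<^sub>R y" for s
    by (simp add: N_def K_def)
  have sig2: "\<sigma>*(\<sigma>*x) = x" for x using sig by (metis mult.assoc mult_1)
  have Nk: "N s $ k = \<sigma> *\<^sub>R (\<mu> s k *\<^sub>R a k - N s $ z)" if "k \<noteq> z" for s k
    using that by (simp add: vec_eq_iff Nz N_def K_def a_def \<mu>_def algebra_simps sig2)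
  have q0: "N s $ z \<bullet> (X *v N s $ z) = (1+s^2)^2" for s
  proof -
    have "N s $ z \<bullet> (X *v N s $ z) = (1-s^2)*(1-s^2)*X$z$z + (1-s^2)*(2 * s)*(ebas z \<bullet> (X *v y))
       + (2 * s)*(1-s^2)*(y \<bullet> (X *v ebas z)) + (2 * s)*(2 * s)*(y \<bullet> (X *v y))"
      by (simp add: Nz algebra_simps)
    also have "\<dots> = (1+s^2)^2" using diag ezy yez yy by (simp add: power2_eq_square algebra_simps)
    finally show ?thesis .
  qed
  have q1: "a k \<bullet> (X *v N s $ z) = (1-s^2)*(g k/2) + 2 * s*(\<sigma>*(v$k))" if "k \<noteq> z" for s k
  proof -
    have "a k \<bullet> (X *v N s $ z) = (1-s^2)*(a k \<bullet> (X *v ebas z)) + 2 * s*(a k \<bullet> (X *v y))"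
      by (simp add: Nz algebra_simps)
    then show ?thesis using aXez aXy g_eq[OF that] by simp
  qed
  have q2: "N s $ z \<bullet> (X *v a k) = (1-s^2)*(g k/2) + 2 * s*(\<sigma>*(v$k))" if "k \<noteq> z" for s k
    using q1[OF that] qs by metis
  have diagN: "N s $ k \<bullet> (X *v N s $ k) = (1+s^2)^2" for s k
  proof (cases "k = z")
    case True then show ?thesis using q0 by simp
  next
    case False
    define m where "m = \<mu> s k"
    define n0 where "n0 = N s $ z"
    have "N s $ k \<bullet> (X *v N s $ k) = (\<sigma>*\<sigma>)*(m*m*g k - m*(a k \<bullet> (X *v n0)) - m*(n0 \<bullet> (X *v a k))
        + n0 \<bullet> (X *v n0))"
      by (simp add: Nk[OF False] m_def n0_def g_def algebra_simps inner_diff_left inner_diff_right)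
    also have "\<dots> = m*m*g k - 2*m*((1-s^2)*(g k/2) + 2 * s*(\<sigma>*(v$k))) + (1+s^2)^2"
      using q1[OF False] q2[OF False] q0 sig by (simp add: n0_def)
    also have "m*m*g k - 2*m*((1-s^2)*(g k/2) + 2 * s*(\<sigma>*(v$k))) = m * s * (\<kappa> k * g k - 4*\<sigma>*(v$k))"
      by (simp add: m_def \<mu>_def field_simps power2_eq_square)
    also have "\<dots> = 0" using kg by simp
    finally show ?thesis by simp
  qed
  have vmN: "a k v* N s = \<mu> s k *\<^sub>R a k" if "k \<noteq> z" for s k
  proof -
    have "a k v* N s = N s $ z + \<sigma> *\<^sub>R N s $ k"
      by (simp add: a_def vector_matrix_left_distrib scaleR_vector_matrix_assoc ebas_def axis_vmult)
    also have "\<dots> = \<mu> s k *\<^sub>R a k" using sig by (simp add: Nk[OF that])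
    finally show ?thesis .
  qed
  have rho: "1 + s^2 > (0::real)" for s by (simp add: add_pos_nonneg)
  have Ydiag: "Y s $ k $ k = 1" for s k
  proof -
    have "Y s $ k $ k = (1/(1+s^2)^2) * (N s $ k \<bullet> (X *v N s $ k))"
      by (simp add: Y_def triple_entry)
    also have "\<dots> = 1" using diagN rho[of s] by simp
    finally show ?thesis .
  qed
  have Ypsd: "psd (Y s)" for s unfolding Y_def by (rule triple_psd[OF psdX]) simp
  have Ycons: "a i \<bullet> (Y s *v a j) = (1/(1+s^2)^2) * (\<mu> s i * \<mu> s j * (a i \<bullet> (X *v a j)))"
    if "i \<noteq> z" "j \<noteq> z" for s i j
    by (simp add: Y_def scaleR_mvmult triple_qf vmN[OF that(1)] vmN[OF that(2)] algebra_simps)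
  define S where "S = (\<Sum>k\<in>UNIV. \<bar>\<kappa> k\<bar>)"
  have S0: "S \<ge> 0" by (simp add: S_def sum_nonneg)
  have kS: "\<bar>\<kappa> k\<bar> \<le> S" for k
    unfolding S_def by (rule member_le_sum) auto
  have d0: "\<delta> > 0" using S0 unfolding \<delta>_def S_def[symmetric] by simp
  have mupos: "\<mu> s k > 0" if "\<bar>s\<bar> < \<delta>" for s k
  proof -
    have "\<bar>s\<bar> * (2*(1+S)) < 1" using that S0 unfolding \<delta>_def S_def[symmetric] by (simp add: field_simps)
    moreover have "\<bar>s\<bar>*(2*(1+S)) = 2*\<bar>s\<bar> + 2*(\<bar>s\<bar>*S)" by (simp add: algebra_simps)
    moreover have "\<bar>s\<bar>*S \<ge> 0" using S0 by simp
    ultimately have h1: "\<bar>s\<bar> < 1/2" and h2: "\<bar>s\<bar> * S < 1/2" by linarith+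
    have "\<bar>s\<bar> * \<bar>\<kappa> k\<bar> \<le> \<bar>s\<bar> * S" using kS by (simp add: mult_left_mono)
    then have "\<bar>s * \<kappa> k\<bar> < 1/2" using h2 by (simp add: abs_mult)
    then have "s * \<kappa> k \<ge> - (1/2)" using abs_ge_minus_self[of "s * \<kappa> k"] by linarith
    moreover have "s^2 < 1/4"
    proof -
      have "s^2 = \<bar>s\<bar>*\<bar>s\<bar>" by (simp add: power2_eq_square abs_mult_self_eq)
      also have "\<dots> \<le> \<bar>s\<bar>*(1/2)" using h1 by (intro mult_left_mono) auto
      also have "\<dots> < 1/4" using h1 by simp
      finally show ?thesis .
    qed
    ultimately show ?thesis by (simp add: \<mu>_def)
  qed
  have iz: "i0 \<noteq> z" using vi0 vz by auto
  have Xw: "(X *v w) $ l = w \<bullet> (X *v ebas l)" for w l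
    using qs[of "ebas l" w] by simp
  have Bsym: "transpose B = B"
    by (simp add: vec_eq_iff transpose_def B_def Xw)
  have "B $ i0 $ z = 4 * v$i0"
  proof -
    have "B $ i0 $ z = 2 * v$i0 + \<sigma> * (\<kappa> i0 * (a i0 \<bullet> (X *v ebas z)) - 2 * (y \<bullet> (X *v ebas z)))"
      using iz by (simp add: B_def K_def v_def matrix_vector_mult_scaleR algebra_simps)
    also have "\<dots> = 2 * v$i0 + \<sigma> * (\<kappa> i0 * g i0) / 2"
      using aXez[of i0] g_eq[OF iz] yez by (simp add: algebra_simps)
    also have "\<dots> = 4 * v$i0" using kg[of i0] sig by (simp add: algebra_simps sig2)
    finally show ?thesis .
  qed
  then have Bne: "B \<noteq> 0" using vi0 v_def by auto
  define T2 where "T2 A = (\<Sum>k\<in>UNIV. \<Sum>l\<in>UNIV. A$k$l * (K$l \<bullet> (X *v K$k)))" for A :: "real^'n^'n"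
  have ent: "N s $ l \<bullet> (X *v N s $ k) = (1-s^2)^2 * X$l$k + (s*(1-s^2)) * B$l$k + s^2 * (K$l \<bullet> (X *v K$k))"
    for s l k
    by (simp add: N_def B_def algebra_simps power2_eq_square)
  have trace_exp: "trace (A ** (N s ** X ** transpose (N s))) =
      (1-s^2)^2 * trace (A ** X) + (s*(1-s^2)) * trace (A ** B) + s^2 * T2 A" for A s
    unfolding trace_entries triple_entry ent T2_def by (rule sum3_lin)
  have hyp: "trace (A ** B) = 0" if H: "\<forall>s. \<bar>s\<bar> < \<delta> \<longrightarrow> trace (A ** Y s) \<le> trace (A ** X)" for A
  proof (rule small_s_zero[OF d0])
    fix s :: real assume "\<bar>s\<bar> < \<delta>"
    then have "trace (A ** Y s) \<le> trace (A ** X)" using H by auto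
    then have "(1/(1+s^2)^2) * trace (A ** (N s ** X ** transpose (N s))) \<le> trace (A ** X)"
      by (simp add: Y_def trace_mult_scaleR)
    then have "trace (A ** (N s ** X ** transpose (N s))) \<le> (1+s^2)^2 * trace (A ** X)"
      using rho[of s] by (simp add: field_simps)
    then show "(1-s^2)^2 * trace (A ** X) + s*(1-s^2) * trace (A ** B) + s^2 * T2 A \<le> (1+s^2)^2 * trace (A ** X)"
      by (simp add: trace_exp)
  qed
  have cons: "0 \<le> a i \<bullet> (Y s *v a j)" if "\<bar>s\<bar> < \<delta>" "i \<noteq> z" "j \<noteq> z" "0 \<le> a i \<bullet> (X *v a j)" for s i j
  proof -
    have "0 \<le> \<mu> s i * \<mu> s j * (a i \<bullet> (X *v a j))"
      using mupos[OF that(1), of i] mupos[OF that(1), of j] that(4)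
      by (intro mult_nonneg_nonneg) auto
    then show ?thesis using Ycons[OF that(2,3)] by simp
  qed
  have inE: "Y s \<in> elliptope" for s using Ypsd Ydiag by (simp add: elliptope_def)
  have cons': "\<forall>s. \<bar>s\<bar> < \<delta> \<longrightarrow> Y s \<in> elliptope \<and>
        (\<forall>i j. i \<noteq> z \<longrightarrow> j \<noteq> z \<longrightarrow>
           0 \<le> (ebas z + \<sigma> *\<^sub>R ebas i) \<bullet> (X *v (ebas z + \<sigma> *\<^sub>R ebas j)) \<longrightarrow>
           0 \<le> (ebas z + \<sigma> *\<^sub>R ebas i) \<bullet> (Y s *v (ebas z + \<sigma> *\<^sub>R ebas j)))"
    using inE cons unfolding a_def by blast
  show ?thesis
  proof (intro exI conjI)
    show "transpose B = B" by (rule Bsym)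
    show "B \<noteq> 0" by (rule Bne)
    show "\<delta> > 0" by (rule d0)
  qed (use cons' hyp in auto)
qed

lemma range_sub_span1:
  fixes X :: "real^'n::finite^'n"
  assumes H: "\<forall>u. (X *v u)$z = 0 \<longrightarrow> X *v u = 0"
  shows "rank X \<le> 1"
proof -
  obtain w1 where w1: "\<forall>u. X *v u \<in> span {w1}"
  proof (cases "\<exists>u1. (X *v u1)$z \<noteq> 0")
    case True
    then obtain u1 where u1: "(X *v u1)$z \<noteq> 0" by blast
    define w1 where "w1 = X *v u1"
    have "X *v u \<in> span {w1}" for u
    proof -
      define c where "c = (X *v u)$z / w1$z"
      have "(X *v (u - c *\<^sub>R u1))$z = 0"
        using u1 by (simp add: c_def w1_def matrix_vector_mult_diff_distrib matrix_vector_mult_scaleR)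
      then have "X *v (u - c *\<^sub>R u1) = 0" using H by blast
      then have "X *v u = c *\<^sub>R w1"
        by (simp add: w1_def matrix_vector_mult_diff_distrib matrix_vector_mult_scaleR)
      then show ?thesis by (simp add: span_mul span_base)
    qed
    then show ?thesis using that by blast
  next
    case False
    then have "X *v u = 0" for u using H by blast
    then show ?thesis using that[of 0] by (simp add: span_zero)
  qed
  then have "range (\<lambda>x. X *v x) \<subseteq> span {w1}" by auto
  then have "dim (range (\<lambda>x. X *v x)) \<le> dim (span {w1})" by (rule dim_subset)
  also have "\<dots> \<le> 1" by (simp add: dim_span)
  finally show ?thesis by (simp add: rank_dim_range)
qed

lemma exists_y:
  fixes X :: "real^'n::finite^'n"
  assumes "psd X" "rank X \<ge> 2"
  shows "\<exists>y i. (X *v y)$z = 0 \<and> y \<bullet> (X *v y) = 1 \<and> (X *v y)$i \<noteq> 0"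
proof -
  obtain u where u: "(X *v u)$z = 0" "X *v u \<noteq> 0"
    using range_sub_span1[of X z] assms(2) by force
  then obtain i where i: "(X *v u)$i \<noteq> 0" by (metis vec_eq_iff zero_index)
  define q where "q = u \<bullet> (X *v u)"
  have "q \<ge> 0" using assms(1) by (simp add: psd_def q_def)
  moreover have "q \<noteq> 0" using psd_null[OF assms(1)] u(2) by (auto simp: q_def)
  ultimately have q0: "q > 0" by simp
  define y where "y = (1/sqrt q) *\<^sub>R u"
  have Xy: "X *v y = (1/sqrt q) *\<^sub>R (X *v u)" by (simp add: y_def matrix_vector_mult_scaleR)
  have "y \<bullet> (X *v y) = y \<bullet> ((1/sqrt q) *\<^sub>R (X *v u))" by (simp only: Xy)
  also have "\<dots> = (1/sqrt q) * (1/sqrt q) * q" by (simp add: y_def q_def)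
  also have "\<dots> = 1" using q0 by (simp add: real_sqrt_mult[symmetric])
  finally have "y \<bullet> (X *v y) = 1" .
  moreover have "(X *v y)$z = 0" using u(1) by (simp add: Xy)
  moreover have "(X *v y)$i \<noteq> 0" using i q0 by (simp add: Xy)
  ultimately show ?thesis by blast
qed

lemma sym_subspace: "subspace (sym_mats :: (real^'n::finite^'n) set)"
  by (auto simp: subspace_def sym_mats_def transpose_def vec_eq_iff)

lemma H_subspace:
  fixes B :: "real^'n::finite^'n"
  shows "subspace {A \<in> sym_mats. trace (A ** B) = 0}"
proof -
  have t1: "trace ((x + y) ** B) = trace (x ** B) + trace (y ** B)" for x y :: "real^'n^'n"
    by (simp add: trace_entries sum.distrib distrib_right)
  have t2: "trace ((c *\<^sub>R x) ** B) = c * trace (x ** B)" for c and x :: "real^'n^'n"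
    by (simp add: trace_entries sum_distrib_left mult.assoc)
  have t0: "trace ((0::real^'n^'n) ** B) = 0" by (simp add: trace_entries trace_def)
  show ?thesis using sym_subspace[where 'n='n] t0 t1 t2
    unfolding subspace_def by auto
qed

lemma trace_sq_pos:
  fixes B :: "real^'n::finite^'n"
  assumes "transpose B = B" "B \<noteq> 0"
  shows "trace (B ** B) > 0"
proof -
  obtain k l where kl: "B$k$l \<noteq> 0" using assms(2) by (metis vec_eq_iff zero_index)
  have "trace (B ** B) = (\<Sum>k\<in>UNIV. \<Sum>l\<in>UNIV. B$k$l * B$k$l)"
    by (simp add: trace_entries transpose_eq_entry[OF assms(1)])
  also have "\<dots> > 0"
  proof (rule sum_pos2[of UNIV k])
    show "0 < (\<Sum>l\<in>UNIV. B$k$l * B$k$l)"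
      by (rule sum_pos2[of UNIV l]) (use kl in \<open>auto simp: zero_less_mult_iff\<close>)
    show "\<And>i. i \<in> UNIV \<Longrightarrow> 0 \<le> (\<Sum>l\<in>UNIV. B$i$l * B$i$l)" by (simp add: sum_nonneg)
  qed auto
  finally show ?thesis .
qed

lemma not_vertex:
  fixes X :: "real^'n::finite^'n" and z :: 'n
  assumes C: "C \<in> {elliptope, elliptope' z, elliptope'' z}" and XC: "X \<in> C" and r: "rank X \<ge> 2"
  shows "\<not> is_vertex C X"
proof
  assume vert: "is_vertex C X"
  have XE: "X \<in> elliptope" using C XC by (auto simp: elliptope'_def elliptope''_def)
  then have psdX: "psd X" and diag: "\<forall>i. X$i$i = 1" by (auto simp: elliptope_def)
  obtain y i0 where y: "(X *v y)$z = 0" "y \<bullet> (X *v y) = 1" "(X *v y)$i0 \<noteq> 0"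
    using exists_y[OF psdX r] by blast
  obtain \<sigma> :: real where sig: "\<sigma>*\<sigma> = 1"
    and sigC: "\<And>Y. Y \<in> elliptope \<Longrightarrow> (\<forall>i j. i \<noteq> z \<longrightarrow> j \<noteq> z \<longrightarrow>
           0 \<le> (ebas z + \<sigma> *\<^sub>R ebas i) \<bullet> (X *v (ebas z + \<sigma> *\<^sub>R ebas j)) \<longrightarrow>
           0 \<le> (ebas z + \<sigma> *\<^sub>R ebas i) \<bullet> (Y *v (ebas z + \<sigma> *\<^sub>R ebas j))) \<Longrightarrow> Y \<in> C"
  proof -
    consider "C = elliptope" | "C = elliptope' z" | "C = elliptope'' z" using C by auto
    then show ?thesis
    proof cases
      case 1 then show ?thesis using that[of 1] by auto
    next
      case 2
      show ?thesis
      proof (rule that[of 1])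
        fix Y assume "Y \<in> elliptope" and H: "\<forall>i j. i \<noteq> z \<longrightarrow> j \<noteq> z \<longrightarrow>
           0 \<le> (ebas z + 1 *\<^sub>R ebas i) \<bullet> (X *v (ebas z + 1 *\<^sub>R ebas j)) \<longrightarrow>
           0 \<le> (ebas z + 1 *\<^sub>R ebas i) \<bullet> (Y *v (ebas z + 1 *\<^sub>R ebas j))"
        then show "Y \<in> C" using XC 2 by (auto simp: elliptope'_def)
      qed simp
    next
      case 3
      show ?thesis
      proof (rule that[of "-1"])
        fix Y assume "Y \<in> elliptope" and H: "\<forall>i j. i \<noteq> z \<longrightarrow> j \<noteq> z \<longrightarrow>
           0 \<le> (ebas z + (-1) *\<^sub>R ebas i) \<bullet> (X *v (ebas z + (-1) *\<^sub>R ebas j)) \<longrightarrow>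
           0 \<le> (ebas z + (-1) *\<^sub>R ebas i) \<bullet> (Y *v (ebas z + (-1) *\<^sub>R ebas j))"
        then show "Y \<in> C" using XC 3 by (auto simp: elliptope''_def)
      qed simp
    qed
  qed
  obtain B \<delta> Y where B: "transpose B = B" "B \<noteq> 0" "\<delta> > (0::real)"
    and Yin: "\<forall>s. \<bar>s\<bar> < \<delta> \<longrightarrow> Y s \<in> elliptope \<and>
        (\<forall>i j. i \<noteq> z \<longrightarrow> j \<noteq> z \<longrightarrow>
           0 \<le> (ebas z + \<sigma> *\<^sub>R ebas i) \<bullet> (X *v (ebas z + \<sigma> *\<^sub>R ebas j)) \<longrightarrow>
           0 \<le> (ebas z + \<sigma> *\<^sub>R ebas i) \<bullet> (Y s *v (ebas z + \<sigma> *\<^sub>R ebas j)))"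
    and hyp: "\<forall>A. (\<forall>s. \<bar>s\<bar> < \<delta> \<longrightarrow> trace (A ** Y s) \<le> trace (A ** X)) \<longrightarrow> trace (A ** B) = 0"
    using curve_lemma[OF psdX diag sig y] by blast
  have YC: "Y s \<in> C" if "\<bar>s\<bar> < \<delta>" for s using Yin that sigC by blast
  define H where "H = {A \<in> sym_mats. trace (A ** B) = 0}"
  have NH: "normal_cone C X \<subseteq> H"
  proof
    fix A assume A: "A \<in> normal_cone C X"
    then have "A \<in> sym_mats" "\<forall>Y'\<in>C. trace (A ** Y') \<le> trace (A ** X)" by (auto simp: normal_cone_def)
    then show "A \<in> H" using hyp YC by (auto simp: H_def)
  qed
  have subH: "subspace H" unfolding H_def by (rule H_subspace)
  have "H \<subseteq> sym_mats" by (auto simp: H_def)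
  moreover have "B \<in> sym_mats" "B \<notin> H" using B trace_sq_pos[OF B(1,2)] by (auto simp: sym_mats_def H_def)
  ultimately have "span H \<subset> span sym_mats"
    using subH sym_subspace by (metis psubsetI span_eq_iff)
  then have "dim H < dim (sym_mats :: (real^'n^'n) set)" by (rule dim_psubset)
  moreover have "aff_dim (normal_cone C X) \<le> aff_dim H" using NH by (rule aff_dim_subset)
  moreover have "aff_dim H = int (dim H)" using subH by (rule aff_dim_subspace)
  moreover have "aff_dim (sym_mats :: (real^'n^'n) set) = int (dim (sym_mats :: (real^'n^'n) set))"
    using sym_subspace by (rule aff_dim_subspace)
  ultimately show False using vert unfolding is_vertex_def by linarith
qed

lemma outer_mv: "outer u *v x = (u \<bullet> x) *\<^sub>R (u::real^'n::finite)"
  by (simp add: vec_eq_iff outer_def matrix_vector_mult_def inner_vec_def sum_distrib_left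
      sum_distrib_right mult_ac)

lemma rank_outer:
  fixes u :: "real^'n::finite"
  assumes "u \<noteq> 0"
  shows "rank (outer u) = 1"
proof -
  have "range (\<lambda>x. outer u *v x) \<subseteq> span {u}"
    by (auto simp: outer_mv span_mul span_base)
  then have "dim (range (\<lambda>x. outer u *v x)) \<le> dim (span {u})" by (rule dim_subset)
  also have "\<dots> \<le> 1" by (simp add: dim_span)
  finally have "rank (outer u) \<le> 1" by (simp add: rank_dim_range)
  moreover have "outer u \<noteq> 0"
  proof
    assume "outer u = 0"
    obtain i where "u$i \<noteq> 0" using assms by (metis vec_eq_iff zero_index)
    moreover have "outer u $ i $ i = 0" using \<open>outer u = 0\<close> by simp
    ultimately show False by (simp add: outer_def)
  qed
  then have "rank (outer u) \<noteq> 0" by (simp add: rank_eq_0)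
  ultimately show ?thesis by linarith
qed

lemma rank1_factor:
  fixes X :: "real^'n::finite^'n"
  assumes "rank X = 1"
  shows "\<exists>w c. \<forall>i j. X$i$j = c j * w$i"
proof -
  have "dim (range (\<lambda>x. X *v x)) = 1" using assms by (simp add: rank_dim_range)
  then obtain Bs where Bs: "Bs \<subseteq> range (\<lambda>x. X *v x)" "range (\<lambda>x. X *v x) \<subseteq> span Bs" "card Bs = 1"
    by (metis basis_exists)
  then obtain w where "Bs = {w}" by (meson card_1_singletonE)
  then have sp: "X *v x \<in> span {w}" for x using Bs(2) by auto
  have "\<forall>j. \<exists>c. X *v ebas j = c *\<^sub>R w"
    using sp by (auto simp: span_singleton)
  then obtain c where c: "\<And>j. X *v ebas j = c j *\<^sub>R w" by metis
  have "X$i$j = c j * w$i" for i j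
  proof -
    have "X$i$j = (X *v ebas j)$i" by simp
    then show ?thesis by (simp add: c)
  qed
  then show ?thesis by blast
qed

lemma rank1_lift:
  fixes X :: "real^'n::finite^'n"
  assumes "X \<in> elliptope" "rank X = 1"
  shows "\<exists>S. S \<subseteq> UNIV - {z} \<and> X = outer (lift_xS z S)"
proof -
  have sym: "transpose X = X" and diag: "\<And>i. X$i$i = 1" using assms(1) by (auto simp: elliptope_def psd_def)
  have Xs: "X$i$j = X$j$i" for i j using transpose_eq_entry[OF sym] .
  obtain w c where wc: "\<And>i j. X$i$j = c j * w$i" using rank1_factor[OF assms(2)] by blast
  have fac: "X$i$j = X$i$z * X$j$z" for i j
  proof -
    have "X$i$z * X$j$z = X$i$z * X$z$j" by (simp add: Xs[of j z])
    also have "\<dots> = (c j * w$i) * (c z * w$z)" by (simp add: wc)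
    also have "\<dots> = X$i$j * X$z$z" by (simp add: wc)
    finally show ?thesis using diag[of z] by simp
  qed
  have pm: "X$i$z = 1 \<or> X$i$z = -1" for i
  proof -
    have "X$i$z * X$i$z = 1" using fac[of i i] diag[of i] by simp
    then show ?thesis by (metis square_eq_1_iff)
  qed
  define S where "S = {i. i \<noteq> z \<and> X$i$z = 1}"
  have lift: "lift_xS z S $ i = X$i$z" for i
    using pm[of i] diag[of z] by (auto simp: lift_xS_def S_def)
  have "X = outer (lift_xS z S)"
    by (simp add: vec_eq_iff outer_def lift fac[symmetric])
  moreover have "S \<subseteq> UNIV - {z}" by (auto simp: S_def)
  ultimately show ?thesis by blast
qed

lemma trace_outer:
  fixes Y :: "real^'n::finite^'n"
  assumes "transpose Y = Y"
  shows "trace (outer w ** Y) = w \<bullet> (Y *v w)"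
  by (simp add: trace_entries outer_def inner_vec_def matrix_vector_mult_def sum_distrib_left
      transpose_eq_entry[OF assms] mult_ac)

lemma trace_neg: "trace ((- M) ** (Y::real^'n::finite^'n)) = - trace (M ** Y)"
  by (simp add: trace_entries sum_negf)

lemma vertex_outer:
  fixes X :: "real^'n::finite^'n" and z :: 'n
  assumes C: "C \<in> {elliptope, elliptope' z, elliptope'' z}" and XC: "X \<in> C"
    and Xu: "X = outer u" and pm: "\<And>i. u$i = 1 \<or> u$i = -1"
  shows "is_vertex C X"
proof -
  have CE: "C \<subseteq> elliptope" using C by (auto simp: elliptope'_def elliptope''_def)
  have XE: "X \<in> elliptope" using CE XC by auto
  have uu: "u$i * u$i = 1" for i using pm[of i] by auto
  define NC where "NC = normal_cone C X"
  have inN: "A \<in> NC" if "A \<in> sym_mats" "\<And>Y. Y \<in> elliptope \<Longrightarrow> trace (A ** Y) \<le> trace (A ** X)" for A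
    using that CE by (auto simp: NC_def normal_cone_def)
  define D where "D k = (\<chi> i j. if i = k \<and> j = k then (1::real) else 0)" for k :: 'n
  define F where "F i j = (\<chi> k l. (if k = i \<and> l = j then (1::real) else 0) + (if k = j \<and> l = i then 1 else 0))"
    for i j :: 'n
  have trD: "trace (D k ** Y) = Y$k$k" for k and Y :: "real^'n^'n"
  proof -
    have e: "\<And>ka l. (if ka = k \<and> l = k then (1::real) else 0) * Y$l$ka =
       (if l = k then (if ka = k then Y$k$k else 0) else 0)" by auto
    show ?thesis by (simp add: trace_entries D_def e)
  qed
  have DN: "D k \<in> NC" for k
  proof (rule inN)
    show "D k \<in> sym_mats" by (auto simp: sym_mats_def D_def transpose_def vec_eq_iff)
    fix Y :: "real^'n^'n" assume "Y \<in> elliptope"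
    then show "trace (D k ** Y) \<le> trace (D k ** X)" using XE by (simp add: trD elliptope_def)
  qed
  have PN: "- outer w \<in> NC" if "w = u$i *\<^sub>R ebas i - u$j *\<^sub>R ebas j" "i \<noteq> j" for w i j
  proof (rule inN)
    show "- outer w \<in> sym_mats" by (auto simp: sym_mats_def outer_def transpose_def vec_eq_iff)
    fix Y :: "real^'n^'n" assume Y: "Y \<in> elliptope"
    then have "transpose Y = Y" "\<forall>x. 0 \<le> x \<bullet> (Y *v x)" by (auto simp: elliptope_def psd_def)
    then have "trace ((- outer w) ** Y) \<le> 0" by (simp add: trace_neg trace_outer)
    moreover have "trace ((- outer w) ** X) = 0"
    proof -
      have "transpose X = X" using XE by (auto simp: elliptope_def psd_def)
      then have "trace ((- outer w) ** X) = - (w \<bullet> (X *v w))" by (simp add: trace_neg trace_outer)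
      also have "\<dots> = - ((u \<bullet> w) * (u \<bullet> w))" by (simp add: Xu outer_mv inner_commute)
      also have "u \<bullet> w = 0" unfolding that(1) using uu by (simp add: inner_diff_right)
      finally show ?thesis by simp
    qed
    ultimately show "trace ((- outer w) ** Y) \<le> trace ((- outer w) ** X)" by simp
  qed
  have FN: "F i j \<in> span NC" for i j
  proof (cases "i = j")
    case True
    have "F i j = 2 *\<^sub>R D i" using True by (auto simp: F_def D_def vec_eq_iff)
    then show ?thesis using DN by (simp add: span_mul span_base)
  next
    case False
    define w where "w = u$i *\<^sub>R ebas i - u$j *\<^sub>R ebas j"
    have wk: "w$k = (if k = i then u$i else if k = j then -u$j else 0)" for k
      using False by (simp add: w_def ebas_def axis_def)
    have uu2: "u$k * (u$k * x) = x" for k x using uu[of k] by (metis mult.assoc mult_1)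
    have p: "u$i*u$j*(u$i*u$j) = 1" "u$i*u$j*(u$j*u$i) = 1"
      using uu[of i] uu[of j] by (metis mult.assoc mult.commute mult_1)+
    have "((u$i * u$j) *\<^sub>R (D i + D j + (- outer w))) $ k $ l = F i j $ k $ l" for k l
      using False
      by (cases "k = i"; cases "l = i"; cases "k = j"; cases "l = j")
         (simp_all add: F_def D_def outer_def wk uu uu2 p)
    then have "F i j = (u$i * u$j) *\<^sub>R (D i + D j + (- outer w))" by (simp add: vec_eq_iff)
    moreover have "D i + D j + (- outer w) \<in> span NC"
      using DN PN[OF w_def False] by (intro span_add span_base) auto
    ultimately show ?thesis by (simp add: span_mul)
  qed
  have symN: "sym_mats \<subseteq> span NC"
  proof
    fix A :: "real^'n^'n" assume A: "A \<in> sym_mats"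
    then have As: "A$k$l = A$l$k" for k l by (auto simp: sym_mats_def intro: transpose_eq_entry)
    have ent: "(\<Sum>i\<in>UNIV. \<Sum>j\<in>UNIV. (A$i$j/2) *\<^sub>R F i j) $ k $ l = A$k$l" for k l
    proof -
      have e1: "\<And>i j. A$i$j/2 * ((if k = i \<and> l = j then 1 else 0) + (if k = j \<and> l = i then 1 else 0))
         = (if j = l then (if i = k then A$i$j/2 else 0) else 0) + (if j = k then (if i = l then A$i$j/2 else 0) else 0)"
        by auto
      have "(\<Sum>i\<in>UNIV. \<Sum>j\<in>UNIV. (A$i$j/2) *\<^sub>R F i j) $ k $ l
          = (\<Sum>i\<in>UNIV. \<Sum>j\<in>UNIV. A$i$j/2 * ((if k = i \<and> l = j then 1 else 0) + (if k = j \<and> l = i then 1 else 0)))"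
        by (simp add: F_def)
      also have "\<dots> = A$k$l/2 + A$l$k/2" unfolding e1 by (simp add: sum.distrib)
      finally show ?thesis using As[of k l] by simp
    qed
    have "A = (\<Sum>i\<in>UNIV. \<Sum>j\<in>UNIV. (A$i$j/2) *\<^sub>R F i j)" 
      by (rule iffD2[OF vec_eq_iff], intro allI, rule iffD2[OF vec_eq_iff], intro allI, rule ent[symmetric])
    also have "\<dots> \<in> span NC" using FN by (intro span_sum span_mul) auto
    finally show "A \<in> span NC" .
  qed
  have NCsym: "NC \<subseteq> sym_mats" by (auto simp: NC_def normal_cone_def)
  have "0 \<in> NC" by (rule inN) (auto simp: sym_mats_def trace_entries transpose_def vec_eq_iff)
  then have "aff_dim NC = int (dim NC)" by (intro aff_dim_zero) (simp add: hull_inc)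
  moreover have "dim (sym_mats :: (real^'n^'n) set) \<le> dim NC"
    using dim_subset[OF symN] by (simp add: dim_span)
  moreover have "aff_dim NC \<le> aff_dim (sym_mats :: (real^'n^'n) set)" using NCsym by (rule aff_dim_subset)
  moreover have "aff_dim (sym_mats :: (real^'n^'n) set) = int (dim (sym_mats :: (real^'n^'n) set))"
    using sym_subspace by (rule aff_dim_subspace)
  ultimately show ?thesis using XC unfolding is_vertex_def NC_def by linarith
qed

theorem corollary3p4:
  fixes z :: "'n::finite" and C :: "(real^'n^'n) set" and X :: "real^'n^'n"
  assumes "C \<in> {elliptope, elliptope' z, elliptope'' z}"
    and "X \<in> C"
  shows "(is_vertex C X \<longleftrightarrow> rank X = 1)
    \<and> (is_vertex C X \<longleftrightarrow> (\<exists>S. S \<subseteq> UNIV - {z} \<and> X = outer (lift_xS z S)))"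
proof -
  have XE: "X \<in> elliptope" using assms by (auto simp: elliptope'_def elliptope''_def)
  have r0: "rank X \<noteq> 0"
  proof
    assume "rank X = 0"
    then have "X = 0" by (simp add: rank_eq_0)
    then show False using XE by (simp add: elliptope_def)
  qed
  have V1: "rank X = 1" if "is_vertex C X"
  proof (rule ccontr)
    assume "rank X \<noteq> 1"
    then have "rank X \<ge> 2" using r0 by linarith
    then show False using not_vertex[OF assms] that by blast
  qed
  have V2: "\<exists>S. S \<subseteq> UNIV - {z} \<and> X = outer (lift_xS z S)" if "rank X = 1"
    using rank1_lift[OF XE that] .
  have V3: "is_vertex C X" if H: "\<exists>S. S \<subseteq> UNIV - {z} \<and> X = outer (lift_xS z S)"
  proof -
    obtain S where "X = outer (lift_xS z S)" using H by blast
    moreover have "\<And>i. lift_xS z S $ i = 1 \<or> lift_xS z S $ i = -1" by (simp add: lift_xS_def)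
    ultimately show ?thesis using vertex_outer[OF assms] by blast
  qed
  show ?thesis using V1 V2 V3 by blast
qed

end
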